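(* Let $G$ be a graph with $n$ vertices (identified with its graph of positive edges), let $r\ge 1$, and let $P=\{v_1,\ldots,v_r\}$ be the first $r$ pivots chosen by running $\textsf{QwickCluster}$ on $G$ (all of its pivots, if it chooses fewer than $r$). Then the expected number of edges of $G$ not incident with any element of $P\cup\Gamma(P)$ is less than $\frac{n^2}{2(r+1)}$.
   Context: A complete ``$+$/$-$''-labeled graph on $V$ is identified with the graph $(V,E^+)$ of its positive edges. $\Gamma(v)$ is the set of (positive) neighbours of $v$ in $G$ and $\Gamma(S)=\bigcup_{v\in S}\Gamma(v)$. Algorithm $\textsf{QwickCluster}$: set $R\gets V$. While $R\neq\emptyset$: pick a pivot $v$ uniformly at random from $R$; output the cluster $C=\{v\}\cup(\Gamma(v)\cap R)$; set $R\gets R\setminus C$. *)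

theory Defs
  imports "HOL-Probability.Probability"
begin

definition simple_graph :: "'a set \<Rightarrow> 'a set set \<Rightarrow> bool" where
  "simple_graph V E \<longleftrightarrow> finite V \<and> (\<forall>e\<in>E. e \<subseteq> V \<and> card e = 2)"

definition nbr :: "'a set set \<Rightarrow> 'a \<Rightarrow> 'a set" where
  "nbr E v = {u. {u, v} \<in> E}"

definition nbrs :: "'a set set \<Rightarrow> 'a set \<Rightarrow> 'a set" where
  "nbrs E S = (\<Union>v\<in>S. nbr E v)"

text \<open>Distribution of the list of the first k pivots chosen by QwickCluster started
  with remaining set R (all pivots, if fewer than k are chosen).\<close>
primrec qc_pivots :: "'a set set \<Rightarrow> nat \<Rightarrow> 'a set \<Rightarrow> 'a list pmf" where
  "qc_pivots E 0 R = return_pmf []"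
| "qc_pivots E (Suc k) R =
     (if R = {} then return_pmf []
      else pmf_of_set R \<bind> (\<lambda>v. map_pmf (Cons v)
               (qc_pivots E k (R - ({v} \<union> (nbr E v \<inter> R))))))"

definition uncovered_edges :: "'a set set \<Rightarrow> 'a set \<Rightarrow> 'a set set" where
  "uncovered_edges E S = {e \<in> E. e \<inter> S = {}}"

end

theory Submission
  imports Defs
begin

definition adjs :: "'a set set \<Rightarrow> 'a set \<Rightarrow> ('a \<times> 'a) set" where
  "adjs E S = Sigma S (\<lambda>u. {w\<in>S. {u,w} \<in> E})"

definition ac :: "'a set set \<Rightarrow> 'a set \<Rightarrow> real" where
  "ac E S = real (card (adjs E S))"

definition qstep :: "'a set set \<Rightarrow> 'a set \<Rightarrow> 'a set pmf" where
  "qstep E R = (if R = {} then return_pmf R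
     else map_pmf (\<lambda>v. R - ({v} \<union> (nbr E v \<inter> R))) (pmf_of_set R))"

primrec rems :: "'a set set \<Rightarrow> nat \<Rightarrow> 'a set \<Rightarrow> 'a set pmf" where
  "rems E 0 R = return_pmf R"
| "rems E (Suc k) R = qstep E R \<bind> rems E k"

definition hR :: "'a set set \<Rightarrow> 'a set \<Rightarrow> 'a list \<Rightarrow> real" where
  "hR E R P = real (card {e\<in>E. e \<subseteq> R \<and> e \<inter> (set P \<union> nbrs E (set P)) = {}})"

lemma set_qstep: "finite R \<Longrightarrow> set_pmf (qstep E R) \<subseteq> Pow R"
  unfolding qstep_def by (auto simp: set_pmf_of_set)

lemma fin_qstep: "finite R \<Longrightarrow> finite (set_pmf (qstep E R))"
  using set_qstep by (metis finite_Pow_iff finite_subset)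

lemma set_rems: "finite R \<Longrightarrow> set_pmf (rems E k R) \<subseteq> Pow R"
proof (induction k arbitrary: R)
  case 0
  then show ?case by simp
next
  case (Suc k)
  show ?case
  proof
    fix X assume "X \<in> set_pmf (rems E (Suc k) R)"
    then obtain R' where R': "R' \<in> set_pmf (qstep E R)" "X \<in> set_pmf (rems E k R')"
      by auto
    have "R' \<subseteq> R" using R'(1) set_qstep[OF Suc.prems] by auto
    hence "finite R'" using Suc.prems finite_subset by blast
    then show "X \<in> Pow R" using Suc.IH[of R'] R'(2) \<open>R' \<subseteq> R\<close> by auto
  qed
qed

lemma fin_rems: "finite R \<Longrightarrow> finite (set_pmf (rems E k R))"
  using set_rems by (metis finite_Pow_iff finite_subset)

lemma set_qc: "finite R \<Longrightarrow> set_pmf (qc_pivots E k R) \<subseteq> {xs. set xs \<subseteq> R \<and> length xs \<le> k}"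
proof (induction k arbitrary: R)
  case 0
  then show ?case by simp
next
  case (Suc k)
  show ?case
  proof (cases "R = {}")
    case True then show ?thesis by simp
  next
    case False
    show ?thesis
    proof
      fix xs assume "xs \<in> set_pmf (qc_pivots E (Suc k) R)"
      then obtain v ys where v: "v \<in> R" "xs = v # ys"
        "ys \<in> set_pmf (qc_pivots E k (R - ({v} \<union> (nbr E v \<inter> R))))"
        using False Suc.prems by (auto simp: set_pmf_of_set)
      have "finite (R - ({v} \<union> (nbr E v \<inter> R)))" using Suc.prems by simp
      from Suc.IH[OF this] v show "xs \<in> {xs. set xs \<subseteq> R \<and> length xs \<le> Suc k}" by auto
    qed
  qed
qed

lemma fin_qc: "finite R \<Longrightarrow> finite (set_pmf (qc_pivots E k R))"
  by (rule finite_subset[OF set_qc]) (auto intro: finite_lists_length_le)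

lemma expect_bind_fin:
  fixes h :: "'b \<Rightarrow> real"
  assumes "finite (set_pmf p)" "\<And>x. x \<in> set_pmf p \<Longrightarrow> finite (set_pmf (f x))"
  shows "measure_pmf.expectation (p \<bind> f) h =
         measure_pmf.expectation p (\<lambda>x. measure_pmf.expectation (f x) h)"
  using assms
  by (subst pmf_expectation_bind[of "set_pmf p"]) (auto simp: integral_measure_pmf[of "set_pmf p"])

lemma rems_Suc': "rems E (Suc k) R = rems E k R \<bind> qstep E"
proof (induction k arbitrary: R)
  case 0
  have "rems E 0 = return_pmf" by (rule ext) simp
  then show ?case by (simp add: bind_return_pmf bind_return_pmf')
next
  case (Suc k)
  have eq: "rems E (Suc k) = (\<lambda>R'. rems E k R' \<bind> qstep E)" by (rule ext) (rule Suc.IH)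
  have "rems E (Suc (Suc k)) R = qstep E R \<bind> rems E (Suc k)" by simp
  also have "\<dots> = qstep E R \<bind> (\<lambda>R'. rems E k R' \<bind> qstep E)" by (simp only: eq)
  also have "\<dots> = (qstep E R \<bind> rems E k) \<bind> qstep E" by (simp only: bind_assoc_pmf)
  also have "\<dots> = rems E (Suc k) R \<bind> qstep E" by simp
  finally show ?case .
qed

lemma xbound:
  fixes x :: "nat \<Rightarrow> real"
  assumes "\<And>k. 0 \<le> x k" "\<And>k. x (Suc k) \<le> x k - (x k)^2" "x 0 < 1"
  shows "x k < 1 / (real k + 1)"
proof (induction k)
  case 0 then show ?case using assms by simp
next
  case (Suc k)
  show ?case
  proof (cases k)
    case 0
    have "x 1 \<le> x 0 - (x 0)^2" using assms(2)[of 0] by simp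
    also have "\<dots> \<le> 1/4" 
    proof -
      have "0 \<le> (x 0 - 1/2)^2" by simp
      then show ?thesis by (simp add: power2_eq_square algebra_simps)
    qed
    finally show ?thesis using 0 by simp
  next
    case (Suc j)
    define c where "c = 1 / (real k + 1)"
    have c: "0 < c" "c \<le> 1/2" using Suc by (auto simp: c_def field_simps)
    have xk: "0 \<le> x k" "x k < c" using assms(1) Suc.IH by (auto simp: c_def)
    have "x (Suc k) \<le> x k - (x k)^2" by (rule assms(2))
    also have "\<dots> < c - c^2"
    proof -
      have "(c - c^2) - (x k - (x k)^2) = (c - x k) * (1 - c - x k)" by (simp add: algebra_simps power2_eq_square)
      also have "\<dots> > 0" using xk c by (intro mult_pos_pos) auto
      finally show ?thesis by simp
    qed
    also have "c - c^2 \<le> 1 / (real (Suc k) + 1)"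
    proof -
      have "c - c^2 = real k / ((real k + 1) * (real k + 1))"
      proof -
        have "real k + 1 > 0" by simp
        then show ?thesis unfolding c_def
          by (simp add: power2_eq_square divide_simps)
      qed
      also have "\<dots> \<le> 1 / (real k + 2)"
        using mult_nonneg_nonneg[of "real k" "real k"] by (simp add: divide_simps algebra_simps) (smt (verit) mult_nonneg_nonneg of_nat_0_le_iff)
      finally show ?thesis by (simp add: add.commute)
    qed
    finally show ?thesis .
  qed
qed



locale sg =
  fixes V :: "'a set" and E :: "'a set set"
  assumes sg: "simple_graph V E"
begin

lemma finV: "finite V" using sg by (simp add: simple_graph_def)
lemma EsubV: "e \<in> E \<Longrightarrow> e \<subseteq> V" using sg by (simp add: simple_graph_def)
lemma card2: "e \<in> E \<Longrightarrow> card e = 2" using sg by (simp add: simple_graph_def)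
lemma finE: "finite E"
  using finV EsubV by (meson Pow_iff finite_Pow_iff finite_subset subsetI)

lemma adjs_sub: "adjs E S \<subseteq> V \<times> V"
  unfolding adjs_def using EsubV by auto

lemma fin_adjs: "finite (adjs E S)"
  using adjs_sub finV finite_subset by blast

lemma adjs_empty: "adjs E {} = {}" by (simp add: adjs_def)

lemma ac_nonneg: "0 \<le> ac E S" by (simp add: ac_def)

lemma base: "2 * card {e\<in>E. e \<subseteq> S} \<le> card (adjs E S)"
proof -
  define ES where "ES = {e\<in>E. e \<subseteq> S}"
  define D where "D e = {p. {fst p, snd p} = e \<and> fst p \<noteq> snd p}" for e :: "'a set"
  have finES: "finite ES" using finE by (simp add: ES_def)
  have cD: "card (D e) = 2" if "e \<in> ES" for e
  proof -
    from that have "card e = 2" using card2 by (simp add: ES_def)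
    then obtain a b where ab: "e = {a,b}" "a \<noteq> b" by (auto simp: card_2_iff)
    have "D e = {(a,b),(b,a)}" unfolding D_def ab using ab(2) by (auto simp: doubleton_eq_iff)
    then show ?thesis using ab by simp
  qed
  have finD: "finite (D e)" if "e \<in> ES" for e
    using cD[OF that] by (metis card.infinite zero_neq_numeral)
  have "card (\<Union>e\<in>ES. D e) = (\<Sum>e\<in>ES. card (D e))"
    by (rule card_UN_disjoint[OF finES]) (use finD in \<open>auto simp: D_def\<close>)
  also have "\<dots> = 2 * card ES" using cD by simp
  finally have eq: "card (\<Union>e\<in>ES. D e) = 2 * card ES" .
  have "(\<Union>e\<in>ES. D e) \<subseteq> adjs E S"
    unfolding adjs_def D_def ES_def by auto
  then have "card (\<Union>e\<in>ES. D e) \<le> card (adjs E S)"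
    by (rule card_mono[OF fin_adjs])
  then show ?thesis using eq by (simp add: ES_def)
qed

lemma ac_lt: "V \<noteq> {} \<Longrightarrow> ac E V < real (card V) ^ 2"
proof -
  assume "V \<noteq> {}"
  then obtain v where v: "v \<in> V" by auto
  have "(v,v) \<notin> adjs E V" using card2[of "{v}"] by (auto simp: adjs_def)
  then have "adjs E V \<subset> V \<times> V" using adjs_sub v by auto
  then have "card (adjs E V) < card (V \<times> V)"
    by (rule psubset_card_mono[rotated]) (simp add: finV)
  then show ?thesis by (simp add: ac_def card_cartesian_product power2_eq_square) (metis of_nat_less_iff of_nat_mult)
qed

end


context sg begin

lemma step_bound:
  assumes RV: "R \<subseteq> V"
  shows "measure_pmf.expectation (qstep E R) (ac E) \<le> ac E R - (ac E R)^2 / real (card V)^2"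
proof (cases "R = {}")
  case True
  then show ?thesis by (simp add: qstep_def ac_def adjs_empty)
next
  case False
  have finR: "finite R" using RV finV finite_subset by blast
  define d where "d u = card {w\<in>R. {u,w}\<in>E}" for u
  define Rv where "Rv v = R - ({v} \<union> (nbr E v \<inter> R))" for v
  define Nv where "Nv v = {v} \<union> (nbr E v \<inter> R)" for v
  define a where "a = ac E R"
  define n where "n = real (card R)"
  define N where "N = real (card V)"
  have npos: "n > 0" using False finR by (simp add: n_def card_gt_0_iff)
  have nN: "n \<le> N" unfolding n_def N_def using RV finV by (simp add: card_mono)
  have exp: "measure_pmf.expectation (qstep E R) (ac E) = (\<Sum>v\<in>R. ac E (Rv v)) / n"
    using False finR by (simp add: qstep_def integral_pmf_of_set Rv_def n_def)
  have i: "(\<Sum>u\<in>Nv v. real (d u)) \<le> a - ac E (Rv v)" if v: "v \<in> R" for v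
  proof -
    have sub: "adjs E (Rv v) \<subseteq> adjs E R" by (auto simp: adjs_def Rv_def)
    have NvR: "Nv v \<subseteq> R" using v by (auto simp: Nv_def)
    have finNv: "finite (Nv v)" using NvR finR finite_subset by blast
    have "Sigma (Nv v) (\<lambda>u. {w\<in>R. {u,w}\<in>E}) \<subseteq> adjs E R - adjs E (Rv v)"
      using NvR by (auto simp: adjs_def Rv_def Nv_def)
    then have "card (Sigma (Nv v) (\<lambda>u. {w\<in>R. {u,w}\<in>E})) \<le> card (adjs E R - adjs E (Rv v))"
      by (rule card_mono[rotated]) (use fin_adjs in blast)
    also have "\<dots> = card (adjs E R) - card (adjs E (Rv v))"
      by (rule card_Diff_subset[OF _ sub]) (rule fin_adjs)
    finally have "(\<Sum>u\<in>Nv v. d u) \<le> card (adjs E R) - card (adjs E (Rv v))"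
      using finNv finR by (simp add: card_SigmaI d_def)
    moreover have "card (adjs E (Rv v)) \<le> card (adjs E R)" by (rule card_mono[OF fin_adjs sub])
    ultimately show ?thesis
      by (simp add: a_def ac_def of_nat_diff flip: of_nat_sum)
  qed
  have ii: "(\<Sum>u\<in>R. real (d u)^2) \<le> (\<Sum>v\<in>R. \<Sum>u\<in>Nv v. real (d u))"
  proof -
    have "(\<Sum>v\<in>R. \<Sum>u\<in>{u\<in>R. {u,v}\<in>E}. real (d u)) \<le> (\<Sum>v\<in>R. \<Sum>u\<in>Nv v. real (d u))"
    proof (rule sum_mono)
      fix v assume v: "v \<in> R"
      have NvR: "Nv v \<subseteq> R" using v by (auto simp: Nv_def)
      have finNv: "finite (Nv v)" using NvR finR finite_subset by blast
      show "(\<Sum>u\<in>{u\<in>R. {u,v}\<in>E}. real (d u)) \<le> (\<Sum>u\<in>Nv v. real (d u))"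
        by (rule sum_mono2[OF finNv]) (auto simp: Nv_def nbr_def)
    qed
    moreover have "(\<Sum>v\<in>R. \<Sum>u\<in>{u\<in>R. {u,v}\<in>E}. real (d u)) = (\<Sum>u\<in>R. \<Sum>v\<in>{v\<in>R. {u,v}\<in>E}. real (d u))"
      by (rule sum.swap_restrict[OF finR finR])
    moreover have "(\<Sum>u\<in>R. \<Sum>v\<in>{v\<in>R. {u,v}\<in>E}. real (d u)) = (\<Sum>u\<in>R. real (d u)^2)"
      by (simp add: d_def power2_eq_square)
    ultimately show ?thesis by simp
  qed
  have iii: "(\<Sum>u\<in>R. real (d u)) = a"
    using finR by (simp add: a_def ac_def adjs_def card_SigmaI d_def flip: of_nat_sum)
  have iv: "(\<Sum>u\<in>R. real (d u))^2 \<le> (\<Sum>u\<in>R. real (d u)^2) * n"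
    unfolding n_def by (rule sum_squared_le_sum_of_squares)
  have S: "a^2 / n \<le> (\<Sum>v\<in>R. (a - ac E (Rv v)))"
  proof -
    have "a^2 / n \<le> (\<Sum>u\<in>R. real (d u)^2)" using iv iii npos by (simp add: divide_simps)
    also have "\<dots> \<le> (\<Sum>v\<in>R. \<Sum>u\<in>Nv v. real (d u))" by (rule ii)
    also have "\<dots> \<le> (\<Sum>v\<in>R. (a - ac E (Rv v)))" by (rule sum_mono) (rule i)
    finally show ?thesis .
  qed
  have "(\<Sum>v\<in>R. (a - ac E (Rv v))) = n * a - (\<Sum>v\<in>R. ac E (Rv v))"
    by (simp add: sum_subtractf n_def)
  with S have "(\<Sum>v\<in>R. ac E (Rv v)) \<le> n * a - a^2 / n" by linarith
  then have "(\<Sum>v\<in>R. ac E (Rv v)) / n \<le> a - a^2 / n^2"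
    using npos by (simp add: divide_simps power2_eq_square) (simp add: algebra_simps)
  also have "a^2 / n^2 \<ge> a^2 / N^2"
    using npos nN by (intro divide_left_mono) (auto intro: power_mono)
  then have "a - a^2 / n^2 \<le> a - a^2 / N^2" by simp
  finally show ?thesis using exp by (simp add: a_def N_def)
qed

end


context sg begin

lemma hR_step: "hR E R (v # P) \<le> hR E (R - ({v} \<union> (nbr E v \<inter> R))) P"
proof -
  have "{e\<in>E. e \<subseteq> R \<and> e \<inter> (set (v#P) \<union> nbrs E (set (v#P))) = {}}
        \<subseteq> {e\<in>E. e \<subseteq> R - ({v} \<union> (nbr E v \<inter> R)) \<and> e \<inter> (set P \<union> nbrs E (set P)) = {}}"
    by (auto simp: nbrs_def)
  then show ?thesis unfolding hR_def by (intro of_nat_mono card_mono) (auto intro: finite_subset[OF _ finE])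
qed

lemma lemB:
  assumes "R \<subseteq> V"
  shows "measure_pmf.expectation (qc_pivots E k R) (\<lambda>P. 2 * hR E R P)
         \<le> measure_pmf.expectation (rems E k R) (ac E)"
  using assms
proof (induction k arbitrary: R)
  case 0
  have "nbrs E {} = {}" by (simp add: nbrs_def)
  then show ?case using base[of R] by (simp add: hR_def ac_def)
next
  case (Suc k)
  have finR: "finite R" using Suc.prems finV finite_subset by blast
  show ?case
  proof (cases "R = {}")
    case True
    have "2 * card {e\<in>E. e \<subseteq> {}} \<le> 0" using base[of "{}"] by (simp add: adjs_empty)
    then have "hR E R [] = 0" using True by (auto simp: hR_def)
    moreover have "0 \<le> measure_pmf.expectation (rems E (Suc k) R) (ac E)"
      by (rule integral_nonneg_AE) (simp add: ac_nonneg)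
    ultimately show ?thesis using True by simp
  next
    case False
    define Rv where "Rv v = R - ({v} \<union> (nbr E v \<inter> R))" for v
    have RvV: "Rv v \<subseteq> V" for v using Suc.prems by (auto simp: Rv_def)
    have finRv: "finite (Rv v)" for v using RvV finV finite_subset by blast
    have L: "measure_pmf.expectation (qc_pivots E (Suc k) R) (\<lambda>P. 2 * hR E R P)
       = (\<Sum>v\<in>R. measure_pmf.expectation (map_pmf (Cons v) (qc_pivots E k (Rv v))) (\<lambda>P. 2 * hR E R P) /\<^sub>R real (card R))"
      using False finR
      by (simp only: qc_pivots.simps if_False Rv_def)
         (rule pmf_expectation_bind_pmf_of_set, auto intro!: fin_qc)
    have Rr: "measure_pmf.expectation (rems E (Suc k) R) (ac E)
       = (\<Sum>v\<in>R. measure_pmf.expectation (rems E k (Rv v)) (ac E) /\<^sub>R real (card R))"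
      using False finR
      by (simp only: rems.simps qstep_def if_False bind_map_pmf Rv_def)
         (rule pmf_expectation_bind_pmf_of_set, auto intro!: fin_rems)
    have each: "measure_pmf.expectation (map_pmf (Cons v) (qc_pivots E k (Rv v))) (\<lambda>P. 2 * hR E R P)
          \<le> measure_pmf.expectation (rems E k (Rv v)) (ac E)" for v
    proof -
      have "measure_pmf.expectation (map_pmf (Cons v) (qc_pivots E k (Rv v))) (\<lambda>P. 2 * hR E R P)
          = measure_pmf.expectation (qc_pivots E k (Rv v)) (\<lambda>P. 2 * hR E R (v # P))" by simp
      also have "\<dots> \<le> measure_pmf.expectation (qc_pivots E k (Rv v)) (\<lambda>P. 2 * hR E (Rv v) P)"
        by (rule integral_mono) (auto intro!: integrable_measure_pmf_finite fin_qc[OF finRv]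
              simp: hR_step[of R v, folded Rv_def])
      also have "\<dots> \<le> measure_pmf.expectation (rems E k (Rv v)) (ac E)"
        by (rule Suc.IH[OF RvV])
      finally show ?thesis .
    qed
    show ?thesis unfolding L Rr
      by (rule sum_mono) (intro scaleR_left_mono each, simp)
  qed
qed

end


context sg begin

lemma Xrec:
  "measure_pmf.expectation (rems E (Suc k) V) (ac E)
   \<le> measure_pmf.expectation (rems E k V) (ac E)
      - (measure_pmf.expectation (rems E k V) (ac E))^2 / real (card V)^2"
proof -
  define p where "p = rems E k V"
  define N where "N = real (card V)"
  have finp: "finite (set_pmf p)" unfolding p_def by (rule fin_rems[OF finV])
  have sub: "R \<subseteq> V" if "R \<in> set_pmf p" for R using set_rems[OF finV] that by (auto simp: p_def)
  have int: "integrable (measure_pmf p) f" for f :: "'a set \<Rightarrow> real"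
    by (rule integrable_measure_pmf_finite[OF finp])
  have "measure_pmf.expectation (rems E (Suc k) V) (ac E)
        = measure_pmf.expectation p (\<lambda>R. measure_pmf.expectation (qstep E R) (ac E))"
    unfolding rems_Suc' p_def[symmetric]
    by (rule expect_bind_fin[OF finp]) (meson fin_qstep finV finite_subset sub)
  also have "\<dots> \<le> measure_pmf.expectation p (\<lambda>R. ac E R - (ac E R)^2 / N^2)"
    by (rule integral_mono_AE[OF int int]) (auto intro!: AE_pmfI step_bound sub simp: N_def)
  also have "\<dots> = measure_pmf.expectation p (ac E) - measure_pmf.expectation p (\<lambda>R. (ac E R)^2) / N^2"
    using int by simp
  also have "\<dots> \<le> measure_pmf.expectation p (ac E) - (measure_pmf.expectation p (ac E))^2 / N^2"
  proof -
    have "0 \<le> measure_pmf.variance p (ac E)" by (rule measure_pmf.variance_positive)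
    then have "(measure_pmf.expectation p (ac E))^2 \<le> measure_pmf.expectation p (\<lambda>R. (ac E R)^2)"
      using measure_pmf.variance_eq[OF int int, of "ac E"] by simp
    then show ?thesis by (simp add: divide_right_mono)
  qed
  finally show ?thesis by (simp add: p_def N_def)
qed

end

theorem lemma3p3:
  fixes V :: "'a set" and E :: "'a set set" and r :: nat
  assumes "simple_graph V E" and "V \<noteq> {}" and "r \<ge> 1"
  shows "measure_pmf.expectation (qc_pivots E r V)
           (\<lambda>P. real (card (uncovered_edges E (set P \<union> nbrs E (set P)))))
         < real (card V) ^ 2 / (2 * (real r + 1))"
proof -
  interpret sg V E by (rule sg.intro) (rule assms(1))
  define N where "N = real (card V)"
  have Npos: "N > 0" using assms(2) finV by (simp add: N_def card_gt_0_iff)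
  define X where "X k = measure_pmf.expectation (rems E k V) (ac E)" for k
  define x where "x k = X k / N^2" for k
  have x0: "\<And>k. 0 \<le> x k" unfolding x_def X_def
    by (intro divide_nonneg_nonneg integral_nonneg_AE) (auto simp: ac_nonneg)
  have x1: "x (Suc k) \<le> x k - (x k)^2" for k
  proof -
    have "X (Suc k) \<le> X k - (X k)^2 / N^2" using Xrec[of k] by (simp add: X_def N_def)
    then have "X (Suc k) / N^2 \<le> (X k - (X k)^2 / N^2) / N^2"
      using Npos by (simp add: divide_right_mono)
    also have "\<dots> = x k - (x k)^2" using Npos by (simp add: x_def field_simps power2_eq_square)
    finally show ?thesis by (simp add: x_def)
  qed
  have x2: "x 0 < 1" using ac_lt[OF assms(2)] Npos by (simp add: x_def X_def N_def)
  have xr: "x r < 1 / (real r + 1)" by (rule xbound[OF x0 x1 x2])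
  then have Xr: "X r < N^2 / (real r + 1)" using Npos by (simp add: x_def field_simps)
  have eqh: "real (card (uncovered_edges E (set P \<union> nbrs E (set P)))) = hR E V P" for P
    unfolding hR_def uncovered_edges_def using EsubV by (metis (lifting))
  have "measure_pmf.expectation (qc_pivots E r V) (\<lambda>P. 2 * hR E V P) \<le> X r"
    unfolding X_def by (rule lemB) simp
  then have "2 * measure_pmf.expectation (qc_pivots E r V) (hR E V) < N^2 / (real r + 1)"
    using Xr by simp
  then show ?thesis by (simp add: eqh N_def field_simps)
qed


end
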